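(* Let $\mathcal{P}$ be the set of $\omega=(R_{zz},R_{zx},R_{xz},R_{xx},t_z,t_x)\in\mathbb{R}^6$ for which $\mathcal{P}(\omega)\neq\emptyset$, where $\mathcal{P}(\omega)$ is the set of $R_{yy}\in\mathbb{R}$ such that the Stokes parameters given by $\omega$, $R_{yy}$, and $R_{zy}=R_{xy}=R_{yz}=R_{yx}=t_y=0$ define a qubit channel. Define on $\mathcal{P}$ $$F(\omega):=\min_{R_{yy}\in\mathcal{P}(\omega)} H_{\rho_{R_{yy}}}(X|E),$$ where $\rho_{R_{yy}}$ is the channel with these Stokes parameters. Then $F$ is a continuous function of $\omega$ on $\mathcal{P}$.
   Context: Qubit states are written in Stokes (Bloch) form $\varrho=\frac12(I+\theta_z\sigma_z+\theta_x\sigma_x+\theta_y\sigma_y)$. Every qubit channel $\mathcal{E}_B$ (TPCP map on $2\times 2$ matrices) acts on Bloch vectors as an affine map $\theta\mapsto R\theta+t$ with $R=[R_{ab}]_{a,b\in\{z,x,y\}}$ a real $3\times3$ matrix and $t=(t_z,t_x,t_y)$ real; these are the Stokes parameters. The Choi matrix is $\rho_{AB}=(\mathrm{id}\otimes\mathcal{E}_B)(\psi)$, $|\psi\rangle=\frac{1}{\sqrt2}(|00\rangle+|11\rangle)$ in the $\sigma_z$ eigenbasis. Eve's ambiguity is $H_\rho(X|E):=H(\rho_{XE})-H(\rho_E)$ with $\rho_{XE}=\sum_{x\in\{0,1\}}\frac12|x\rangle\langle x|\otimes\mathcal{E}_E(|x\rangle\langle x|)$, $\mathcal{E}_E$ the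 complementary channel of $\mathcal{E}_B$ to its whole environment; equivalently $H_\rho(X|E)=1+\frac12\sum_x H(\mathcal{E}_B(|x\rangle\langle x|))-H(\rho_{AB})$ (von Neumann entropy, base 2). *)

theory Defs
  imports Complex_Main "Jordan_Normal_Form.Char_Poly"
begin

text \<open>Stokes parameters: R is indexed by {0,1,2} = {z,x,y}, t likewise.\<close>

definition pauli :: "nat \<Rightarrow> complex mat" where
  "pauli a = (if a = 0 then mat 2 2 (\<lambda>(i,j). if i = j then (if i = 0 then 1 else -1) else 0)
              else if a = 1 then mat 2 2 (\<lambda>(i,j). if i = j then 0 else 1)
              else mat 2 2 (\<lambda>(i,j). if i = j then 0 else if i = 0 then -\<i> else \<i>))"

definition tr2 :: "complex mat \<Rightarrow> complex" where
  "tr2 M = M $$ (0,0) + M $$ (1,1)"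

text \<open>The (complex-linear) map on 2x2 matrices determined by the Stokes parameters:
  it sends 1/2(I + theta.sigma) to 1/2(I + (R theta + t).sigma).\<close>
definition stokes_map :: "(nat \<Rightarrow> nat \<Rightarrow> real) \<Rightarrow> (nat \<Rightarrow> real) \<Rightarrow> complex mat \<Rightarrow> complex mat" where
  "stokes_map R t M = (1/2) \<cdot>\<^sub>m (tr2 M \<cdot>\<^sub>m 1\<^sub>m 2 +
      (mat 2 2 (\<lambda>ij. \<Sum>a<3. ((tr2 M * of_real (t a) +
           (\<Sum>b<3. of_real (R a b) * tr2 (M * pauli b))) * pauli a $$ ij))))"

text \<open>id_k tensor E applied to a (2k)x(2k) matrix, index (i,a) ~ 2*i+a.\<close>
definition tensor_id_map :: "nat \<Rightarrow> (complex mat \<Rightarrow> complex mat) \<Rightarrow> complex mat \<Rightarrow> complex mat" where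
  "tensor_id_map k E X = mat (2*k) (2*k) (\<lambda>(p,q).
      E (mat 2 2 (\<lambda>(a,b). X $$ (2*(p div 2) + a, 2*(q div 2) + b))) $$ (p mod 2, q mod 2))"

definition psd :: "complex mat \<Rightarrow> bool" where
  "psd A \<longleftrightarrow> A \<in> carrier_mat (dim_row A) (dim_row A) \<and>
     (\<forall>v \<in> carrier_vec (dim_row A).
        Im (map_vec cnj v \<bullet> (A *\<^sub>v v)) = 0 \<and> 0 \<le> Re (map_vec cnj v \<bullet> (A *\<^sub>v v)))"

definition trace_preserving :: "(complex mat \<Rightarrow> complex mat) \<Rightarrow> bool" where
  "trace_preserving E \<longleftrightarrow> (\<forall>M \<in> carrier_mat 2 2. tr2 (E M) = tr2 M)"

definition completely_positive :: "(complex mat \<Rightarrow> complex mat) \<Rightarrow> bool" where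
  "completely_positive E \<longleftrightarrow>
     (\<forall>k X. k > 0 \<longrightarrow> X \<in> carrier_mat (2*k) (2*k) \<longrightarrow> psd X \<longrightarrow> psd (tensor_id_map k E X))"

text \<open>The Stokes parameters (R,t) define a qubit channel (TPCP map).  The map is linear
  by construction.\<close>
definition qubit_channel :: "(nat \<Rightarrow> nat \<Rightarrow> real) \<Rightarrow> (nat \<Rightarrow> real) \<Rightarrow> bool" where
  "qubit_channel R t \<longleftrightarrow> trace_preserving (stokes_map R t) \<and> completely_positive (stokes_map R t)"

text \<open>Von Neumann entropy (base 2), eigenvalues counted with multiplicity as roots of the
  characteristic polynomial; convention 0 log 0 = 0.\<close>
definition eta :: "real \<Rightarrow> real" where
  "eta x = (if x \<le> 0 then 0 else - x * log 2 x)"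

definition vn_entropy :: "complex mat \<Rightarrow> real" where
  "vn_entropy A = (\<Sum>z \<in> {z. poly (char_poly A) z = 0}.
                     real (order z (char_poly A)) * eta (Re z))"

definition ket_proj :: "nat \<Rightarrow> complex mat" where
  "ket_proj x = mat 2 2 (\<lambda>(i,j). if i = x \<and> j = x then 1 else 0)"

text \<open>Maximally entangled state psi psi^* for |psi> = (|00>+|11>)/sqrt 2.\<close>
definition psi_proj :: "complex mat" where
  "psi_proj = mat 4 4 (\<lambda>(i,j). if i \<in> {0,3} \<and> j \<in> {0,3} then 1/2 else 0)"

definition choi :: "(nat \<Rightarrow> nat \<Rightarrow> real) \<Rightarrow> (nat \<Rightarrow> real) \<Rightarrow> complex mat" where
  "choi R t = tensor_id_map 2 (stokes_map R t) psi_proj"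

text \<open>Eve's ambiguity H(X|E) = 1 + 1/2 sum_x H(E(|x><x|)) - H(rho_AB).\<close>
definition eve_ambiguity :: "(nat \<Rightarrow> nat \<Rightarrow> real) \<Rightarrow> (nat \<Rightarrow> real) \<Rightarrow> real" where
  "eve_ambiguity R t = 1 + (1/2) * (\<Sum>x<2. vn_entropy (stokes_map R t (ket_proj x)))
                         - vn_entropy (choi R t)"

type_synonym param6 = "real \<times> real \<times> real \<times> real \<times> real \<times> real"

text \<open>omega = (Rzz,Rzx,Rxz,Rxx,tz,tx) together with Ryy, other entries zero (0=z,1=x,2=y).\<close>
definition R_of :: "param6 \<Rightarrow> real \<Rightarrow> nat \<Rightarrow> nat \<Rightarrow> real" where
  "R_of w ryy = (case w of (rzz, rzx, rxz, rxx, tz, tx) \<Rightarrow>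
     (\<lambda>a b. if a = 0 \<and> b = 0 then rzz else if a = 0 \<and> b = 1 then rzx
           else if a = 1 \<and> b = 0 then rxz else if a = 1 \<and> b = 1 then rxx
           else if a = 2 \<and> b = 2 then ryy else 0))"

definition t_of :: "param6 \<Rightarrow> nat \<Rightarrow> real" where
  "t_of w = (case w of (rzz, rzx, rxz, rxx, tz, tx) \<Rightarrow>
     (\<lambda>a. if a = 0 then tz else if a = 1 then tx else 0))"

definition Pset :: "param6 \<Rightarrow> real set" where
  "Pset w = {ryy. qubit_channel (R_of w ryy) (t_of w)}"

definition Pdom :: "param6 set" where
  "Pdom = {w. Pset w \<noteq> {}}"

definition F :: "param6 \<Rightarrow> real" where
  "F w = Inf ((\<lambda>ryy. eve_ambiguity (R_of w ryy) (t_of w)) ` Pset w)"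

end

theory Submission
  imports Defs "HOL-Real_Asymp.Real_Asymp" "HOL-Analysis.Elementary_Metric_Spaces"
begin


lemma sum3: "(\<Sum>a<(3::nat). f a) = f 0 + f 1 + (f 2::'a::comm_monoid_add)"
  by (simp add: eval_nat_numeral lessThan_Suc add.commute add.left_commute)

lemma stokes_entries:
  fixes M :: "complex mat"
  assumes "M \<in> carrier_mat 2 2"
  shows "stokes_map R t M = mat 2 2 (\<lambda>(a,b).
     (let m00 = M$$(0,0); m01 = M$$(0,1); m10 = M$$(1,0); m11 = M$$(1,1); tr = m00 + m11;
          az = tr * t 0 + R 0 0 * (m00 - m11) + R 0 1 * (m01 + m10) + R 0 2 * \<i> * (m01 - m10);
          ax = tr * t 1 + R 1 0 * (m00 - m11) + R 1 1 * (m01 + m10) + R 1 2 * \<i> * (m01 - m10);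
          ay = tr * t 2 + R 2 0 * (m00 - m11) + R 2 1 * (m01 + m10) + R 2 2 * \<i> * (m01 - m10)
      in (1/2) * (if a = 0 \<and> b = 0 then tr + az else if a = 1 \<and> b = 1 then tr - az
                  else if a = 0 then ax - \<i> * ay else ax + \<i> * ay)))"
  using assms
  apply (intro eq_matI)
  apply (auto simp: stokes_map_def sum3 pauli_def tr2_def Let_def scalar_prod_def times_mat_def
             algebra_simps less_2_cases_iff numeral_2_eq_2 lessThan_Suc)
  done


definition Cm :: "param6 \<Rightarrow> real \<Rightarrow> nat \<Rightarrow> nat \<Rightarrow> real" where
"Cm w s i j = (case w of (rzz, rzx, rxz, rxx, tz, tx) \<Rightarrow> (1/4) * (
   if i=0\<and>j=0 then 1+tz+rzz else if i=1\<and>j=1 then 1-tz-rzz else if i=2\<and>j=2 then 1+tz-rzz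
   else if i=3 \<and> j=3 then 1-tz+rzz
   else if (i=0\<and>j=1) \<or> (i=1\<and>j=0) then tx+rxz else if (i=0\<and>j=2) \<or> (i=2\<and>j=0) then rzx
   else if (i=0\<and>j=3) \<or> (i=3\<and>j=0) then rxx+s
   else if (i=1\<and>j=2) \<or> (i=2\<and>j=1) then rxx-s else if (i=1\<and>j=3) \<or> (i=3\<and>j=1) then -rzx
   else if (i=2\<and>j=3) \<or> (i=3\<and>j=2) then tx-rxz else 0))"

lemma less4_cases: "(i::nat) < 4 \<Longrightarrow> i = 0 \<or> i = 1 \<or> i = 2 \<or> i = 3" by auto

lemma choi_Cm: "choi (R_of w s) (t_of w) = mat 4 4 (\<lambda>(i,j). of_real (Cm w s i j))"
proof (rule eq_matI)
  fix i j assume ij: "i < dim_row (mat 4 4 (\<lambda>(i,j). of_real (Cm w s i j)) :: complex mat)"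
     "j < dim_col (mat 4 4 (\<lambda>(i,j). of_real (Cm w s i j)) :: complex mat)"
  obtain rzz rzx rxz rxx tz tx where w: "w = (rzz, rzx, rxz, rxx, tz, tx)" by (cases w) auto
  from ij have i: "i < 4" and j: "j < 4" by auto
  show "choi (R_of w s) (t_of w) $$ (i, j) = mat 4 4 (\<lambda>(i,j). of_real (Cm w s i j)) $$ (i, j)"
    using less4_cases[OF i] less4_cases[OF j]
    by (auto simp: choi_def tensor_id_map_def stokes_entries psi_proj_def w R_of_def t_of_def Cm_def
        Let_def field_simps)
qed (auto simp: choi_def tensor_id_map_def)




definition rpsd :: "nat \<Rightarrow> (nat\<Rightarrow>nat\<Rightarrow>real) \<Rightarrow> bool" where
  "rpsd n C \<longleftrightarrow> (\<forall>x. 0 \<le> (\<Sum>i<n. \<Sum>j<n. x i * C i j * x j))"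

lemma qform_expand:
  assumes "A \<in> carrier_mat n n" "v \<in> carrier_vec n"
  shows "map_vec cnj v \<bullet> (A *\<^sub>v v) = (\<Sum>i<n. \<Sum>j<n. cnj (v$i) * A$$(i,j) * v$j)"
  using assms
  by (auto simp: scalar_prod_def mult_mat_vec_def row_def atLeast0LessThan sum_distrib_left
       mult.assoc intro!: sum.cong)

lemma psd_real:
  assumes "psd (mat n n (\<lambda>(i,j). of_real (C i j)))"
  shows "rpsd n C"
  unfolding rpsd_def
proof
  fix x :: "nat \<Rightarrow> real"
  let ?v = "vec n (\<lambda>i. complex_of_real (x i))"
  let ?A = "mat n n (\<lambda>(i,j). complex_of_real (C i j))"
  have "0 \<le> Re (map_vec cnj ?v \<bullet> (?A *\<^sub>v ?v))" using assms unfolding psd_def by auto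
  also have "map_vec cnj ?v \<bullet> (?A *\<^sub>v ?v) = (\<Sum>i<n. \<Sum>j<n. cnj (?v$i) * ?A$$(i,j) * ?v$j)"
    by (rule qform_expand) auto
  also have "\<dots> = of_real (\<Sum>i<n. \<Sum>j<n. x i * C i j * x j)"
    by (simp)
  finally show "0 \<le> (\<Sum>i<n. \<Sum>j<n. x i * C i j * x j)" by simp
qed

lemma psd_psi: "psd psi_proj"
  unfolding psd_def
proof (intro conjI ballI)
  show "psi_proj \<in> carrier_mat (dim_row psi_proj) (dim_row psi_proj)" by (simp add: psi_proj_def)
  fix v :: "complex vec" assume v: "v \<in> carrier_vec (dim_row psi_proj)"
  have d: "dim_row psi_proj = 4" by (simp add: psi_proj_def)
  have e: "map_vec cnj v \<bullet> (psi_proj *\<^sub>v v) = (1/2) * (cnj (v$0) + cnj (v$3)) * (v$0 + v$3)"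
    apply (subst qform_expand[of _ 4])
    using v d apply (auto simp: psi_proj_def eval_nat_numeral lessThan_Suc)
    by (simp add: algebra_simps)
  have f: "(cnj (v$0) + cnj (v$3)) * (v$0 + v$3) = of_real ((cmod (v$0 + v$3))^2)"
    by (metis complex_cnj_add complex_norm_square mult.commute)
  show "Im (map_vec cnj v \<bullet> (psi_proj *\<^sub>v v)) = 0" unfolding e
    by (simp add: mult.assoc f)
  show "0 \<le> Re (map_vec cnj v \<bullet> (psi_proj *\<^sub>v v))" unfolding e
    by (simp add: mult.assoc f)
qed

lemma channel_rpsd:
  assumes "qubit_channel (R_of w s) (t_of w)"
  shows "rpsd 4 (Cm w s)"
proof -
  have "psd (choi (R_of w s) (t_of w))"
    using assms psd_psi unfolding qubit_channel_def completely_positive_def choi_def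
    by (auto simp: psi_proj_def)
  thus ?thesis unfolding choi_Cm by (rule psd_real)
qed

lemma sum_split2: "(\<Sum>p<2*(k::nat). f p :: 'a::comm_monoid_add) = (\<Sum>i<k. \<Sum>a<2. f (2*i+a))"
  by (induction k) (auto simp: eval_nat_numeral lessThan_Suc add.assoc)




lemma sum_if_const_cond: "(\<Sum>j\<in>A. if P then f j else 0) = (if P then (\<Sum>j\<in>A. f j) else 0)"
  by auto

lemma sum_mult_delta: "n < (m::nat) \<Longrightarrow> (\<Sum>j<m. f j * (if j = n then t else 0)) = f n * (t::'a::comm_ring)"
  by (subst sum.cong[OF refl, of _ _ "\<lambda>j. if j = n then f n * t else 0"]) (auto simp: sum.delta mult_ac)

lemma sum_mult_delta2: "n < (m::nat) \<Longrightarrow> (\<Sum>j<m. a * (c j * (if j = n then t else 0))) = t * (a * c n :: 'a::comm_ring)"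
  by (subst sum.cong[OF refl, of _ _ "\<lambda>j. if j = n then t * (a * c n) else 0"]) (auto simp: sum.delta mult_ac)

lemma sum_delta_mult: "n < (m::nat) \<Longrightarrow> (\<Sum>j<m. (if j = n then t else 0) * f j) = t * (f n::'a::comm_ring)"
  by (subst sum.cong[OF refl, of _ _ "\<lambda>j. if j = n then t * f n else 0"]) (auto simp: sum.delta)

lemma quad_delta: "n < (m::nat) \<Longrightarrow>
   (\<Sum>a<m. \<Sum>b<m. (if a = n then 1 else 0) * C a b * (if b = n then 1 else 0)) = (C n n :: 'a::comm_ring_1)"
  by (simp add: sum_mult_delta sum_delta_mult)

lemma quad_shift:
  fixes C :: "nat \<Rightarrow> nat \<Rightarrow> real"
  assumes sym: "\<And>i j. i<m \<Longrightarrow> j<m \<Longrightarrow> C i j = C j i" and n: "n < m"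
  shows "(\<Sum>i<m. \<Sum>j<m. (x i + (if i = n then t else 0)) * C i j * (x j + (if j = n then t else 0)))
    = (\<Sum>i<m. \<Sum>j<m. x i * C i j * x j) + 2 * t * (\<Sum>i<m. C i n * x i) + t^2 * C n n"
proof -
  have "(\<Sum>i<m. \<Sum>j<m. (x i + (if i = n then t else 0)) * C i j * (x j + (if j = n then t else 0)))
     = (\<Sum>i<m. \<Sum>j<m. x i * C i j * x j) + (\<Sum>i<m. \<Sum>j<m. (if i = n then t else 0) * C i j * x j)
       + (\<Sum>i<m. \<Sum>j<m. x i * C i j * (if j = n then t else 0))
       + (\<Sum>i<m. \<Sum>j<m. (if i = n then t else 0) * C i j * (if j = n then t else 0))"
    by (simp add: algebra_simps sum.distrib)
  also have "(\<Sum>i<m. \<Sum>j<m. (if i = n then t else 0) * C i j * x j) = (\<Sum>i<m. if i = n then t * (\<Sum>j<m. C n j * x j) else 0)"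
    by (intro sum.cong) (auto simp: sum_distrib_left mult.assoc)
  also have "\<dots> = t * (\<Sum>j<m. C n j * x j)" using n by simp
  also have "(\<Sum>i<m. \<Sum>j<m. x i * C i j * (if j = n then t else 0)) = (\<Sum>i<m. t * (C i n * x i))"
    using n by (intro sum.cong refl) (simp add: mult_ac sum_mult_delta2)
  also have "\<dots> = t * (\<Sum>i<m. C i n * x i)" by (simp add: sum_distrib_left)
  also have "(\<Sum>i<m. \<Sum>j<m. (if i = n then t else 0) * C i j * (if j = n then t else 0)) = (\<Sum>i<m. if i = n then t * C n n * t else 0)"
    using n by (intro sum.cong refl) (auto simp: sum_mult_delta)
  also have "\<dots> = t^2 * C n n" using n by (simp add: power2_eq_square sum.delta)
  also have "(\<Sum>j<m. C n j * x j) = (\<Sum>i<m. C i n * x i)"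
    using sym n by (intro sum.cong) auto
  finally show ?thesis by simp
qed

lemma rpsd_offdiag_zero:
  fixes C :: "nat \<Rightarrow> nat \<Rightarrow> real"
  assumes "rpsd m C" and sym: "\<And>i j. i<m \<Longrightarrow> j<m \<Longrightarrow> C i j = C j i"
    and n: "n < m" and i: "i < m" and z: "C n n = 0"
  shows "C i n = 0"
proof (rule ccontr)
  assume ne: "C i n \<noteq> 0"
  have "i \<noteq> n" using ne z by auto
  have cii: "C i i \<ge> 0"
  proof -
    have "0 \<le> (\<Sum>a<m. \<Sum>b<m. (if a = i then 1 else 0) * C a b * (if b = i then 1 else 0))"
      by (rule spec[OF assms(1)[unfolded rpsd_def]])
    also have "\<dots> = C i i" using i by (rule quad_delta)
    finally show ?thesis .
  qed
  define t where "t = - C i n / (C i i + 1)"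
  have "0 \<le> (\<Sum>a<m. \<Sum>b<m. ((if a = n then 1 else 0) + (if a = i then t else 0)) * C a b *
               ((if b = n then 1 else 0) + (if b = i then t else 0)))"
    by (rule spec[OF assms(1)[unfolded rpsd_def]])
  also have "\<dots> = C i n * t * 2 + t^2 * C i i"
  proof -
    have q1: "(\<Sum>a<m. \<Sum>b<m. (if a = n then 1 else 0) * C a b * (if b = n then 1 else 0)) = 0"
      using quad_delta[OF n, of C] z by simp
    have q2: "(\<Sum>a<m. C a i * (if a = n then 1 else 0)) = C n i" using n by (simp add: sum_mult_delta)
    show ?thesis
      using quad_shift[of m C i "\<lambda>a. if a = n then 1 else 0" t, OF sym i] q1 q2 sym[OF n i]
      by (simp add: algebra_simps)
  qed
  also have "\<dots> = (C i n)^2 / (C i i + 1)^2 * (- C i i - 2)"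
    using cii by (simp add: t_def divide_simps power2_eq_square) (simp add: algebra_simps)
  also have "\<dots> < 0"
    using cii ne by (intro mult_pos_neg) auto
  finally show False by simp
qed


lemma rpsd_restrict:
  fixes D :: "nat \<Rightarrow> nat \<Rightarrow> real"
  assumes "rpsd (Suc n) D"
  shows "rpsd n D"
  unfolding rpsd_def
proof
  fix x :: "nat \<Rightarrow> real"
  let ?x = "\<lambda>i. if i < n then x i else 0"
  have "0 \<le> (\<Sum>i<Suc n. \<Sum>j<Suc n. ?x i * D i j * ?x j)"
    by (rule spec[OF assms(1)[unfolded rpsd_def]])
  also have "\<dots> = (\<Sum>i<n. \<Sum>j<n. x i * D i j * x j)"
    by (simp add: lessThan_Suc)
  finally show "0 \<le> (\<Sum>i<n. \<Sum>j<n. x i * D i j * x j)" .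
qed

lemma rpsd_decomp:
  "rpsd n C \<Longrightarrow> (\<forall>i<n. \<forall>j<n. C i j = C j i) \<Longrightarrow>
     \<exists>U. \<forall>i<n. \<forall>j<n. C i j = (\<Sum>r<n. U r i * U r j)"
proof (induction n arbitrary: C)
  case 0
  then show ?case by auto
next
  case (Suc n)
  have Z: "\<exists>U. \<forall>i<Suc n. \<forall>j<Suc n. D i j = (\<Sum>r<n. U r i * U r j)"
    if D: "rpsd (Suc n) D" "\<forall>i<Suc n. \<forall>j<Suc n. D i j = D j i" "D n n = 0" for D
  proof -
    have z1: "D i n = 0" if "i < Suc n" for i
      using rpsd_offdiag_zero[OF D(1) _ _ that D(3)] D(2) by auto
    have z2: "D n i = 0" if "i < Suc n" for i using z1[OF that] D(2) that by auto
    obtain U where U: "\<forall>i<n. \<forall>j<n. D i j = (\<Sum>r<n. U r i * U r j)"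
      using Suc.IH[OF rpsd_restrict[OF D(1)]] D(2) by auto
    show ?thesis
    proof (intro exI allI impI)
      fix i j assume i: "i < Suc n" and j: "j < Suc n"
      show "D i j = (\<Sum>r<n. (if i < n then U r i else 0) * (if j < n then U r j else 0))"
      proof (cases "i < n \<and> j < n")
        case True thus ?thesis using U by auto
      next
        case False
        then have "i = n \<or> j = n" using i j by auto
        thus ?thesis using z1 z2 i j by auto
      qed
    qed
  qed
  have dnn: "C n n \<ge> 0"
    using spec[OF Suc.prems(1)[unfolded rpsd_def], of "\<lambda>a. if a = n then 1 else 0"]
    by (simp add: quad_delta)
  show ?case
  proof (cases "C n n = 0")
    case True
    obtain U where U: "\<forall>i<Suc n. \<forall>j<Suc n. C i j = (\<Sum>r<n. U r i * U r j)"
      using Z[OF Suc.prems True] by blast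
    show ?thesis
      by (rule exI[of _ "\<lambda>r i. if r < n then U r i else 0"]) (simp add: U lessThan_Suc)
  next
    case False
    define d where "d = C n n"
    have d: "d > 0" using False dnn d_def by auto
    define u where "u i = C i n / sqrt d" for i
    define D where "D i j = C i j - u i * u j" for i j
    have Dsym: "\<forall>i<Suc n. \<forall>j<Suc n. D i j = D j i" using Suc.prems(2) by (auto simp: D_def)
    have sq: "(d / sqrt d)^2 = d" using d by (simp add: power_divide power2_eq_square)
    have Dnn: "D n n = 0" using sq by (simp add: D_def u_def d_def[symmetric] power2_eq_square)
    have Dpsd: "rpsd (Suc n) D"
      unfolding rpsd_def
    proof
      fix x :: "nat \<Rightarrow> real"
      define S where "S = (\<Sum>a<Suc n. C a n * x a)"
      define t where "t = - S / d"
      have "0 \<le> (\<Sum>i<Suc n. \<Sum>j<Suc n. (x i + (if i = n then t else 0)) * C i j * (x j + (if j = n then t else 0)))"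
        by (rule spec[OF Suc.prems(1)[unfolded rpsd_def]])
      also have "\<dots> = (\<Sum>i<Suc n. \<Sum>j<Suc n. x i * C i j * x j) + 2 * t * S + t^2 * d"
        by (subst quad_shift) (use Suc.prems(2) in \<open>auto simp: S_def d_def\<close>)
      also have "\<dots> = (\<Sum>i<Suc n. \<Sum>j<Suc n. x i * C i j * x j) - S^2 / d"
        using d by (simp add: t_def field_simps power2_eq_square)
      also have "(\<Sum>i<Suc n. \<Sum>j<Suc n. x i * u i * u j * x j) = (\<Sum>i<Suc n. u i * x i)^2"
        unfolding power2_eq_square sum_product by (auto intro!: sum.cong simp: mult_ac)
      hence "S^2 / d = (\<Sum>i<Suc n. \<Sum>j<Suc n. x i * u i * u j * x j)"
        using d by (simp add: u_def S_def sum_divide_distrib[symmetric] power_divide mult_ac)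
      finally show "0 \<le> (\<Sum>i<Suc n. \<Sum>j<Suc n. x i * D i j * x j)"
        by (simp add: D_def algebra_simps sum_subtractf)
    qed
    obtain U where U: "\<forall>i<Suc n. \<forall>j<Suc n. D i j = (\<Sum>r<n. U r i * U r j)"
      using Z[OF Dpsd Dsym Dnn] by blast
    show ?thesis
    proof (rule exI[of _ "\<lambda>r i. if r < n then U r i else u i"], intro allI impI)
      fix i j assume ij: "i < Suc n" "j < Suc n"
      have "C i j - u i * u j = (\<Sum>r<n. U r i * U r j)" using U ij by (simp add: D_def)
      then show "C i j = (\<Sum>r<Suc n. (if r < n then U r i else u i) * (if r < n then U r j else u j))"
        by (simp add: lessThan_Suc algebra_simps)
    qed
  qed
qed




lemma stokes_lin:
  assumes M: "M \<in> carrier_mat 2 2" and a: "a < 2" and b: "b < 2"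
  shows "stokes_map (R_of w s) (t_of w) M $$ (a,b) =
    (\<Sum>c<2. \<Sum>d<2. M$$(c,d) * of_real (2 * Cm w s (2*c+a) (2*d+b)))"
proof -
  obtain rzz rzx rxz rxx tz tx where w: "w = (rzz, rzx, rxz, rxx, tz, tx)" by (cases w) auto
  have e: "stokes_map (R_of w s) (t_of w) M $$ (a,b) = (let m00 = M$$(0,0); m01 = M$$(0,1); m10 = M$$(1,0); m11 = M$$(1,1); tr = m00 + m11;
          az = tr * tz + rzz * (m00 - m11) + rzx * (m01 + m10);
          ax = tr * tx + rxz * (m00 - m11) + rxx * (m01 + m10);
          ay = s * \<i> * (m01 - m10)
      in (1/2) * (if a = 0 \<and> b = 0 then tr + az else if a = 1 \<and> b = 1 then tr - az
                  else if a = 0 then ax - \<i> * ay else ax + \<i> * ay))"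
    using M a b apply (subst stokes_entries[OF M]) using a b apply (simp only: index_mat case_prod_conv)
     apply (simp add: w R_of_def t_of_def Let_def) done
  have s4: "(\<Sum>c<(2::nat). \<Sum>d<(2::nat). f c d) = f 0 0 + f 0 1 + f 1 0 + (f 1 1 :: complex)" for f
    by (simp add: eval_nat_numeral lessThan_Suc)
  have "a = 0 \<or> a = 1" "b = 0 \<or> b = 1" using a b by auto
  then show ?thesis unfolding e s4
    apply (elim disjE)
    apply (simp_all add: w Cm_def Let_def)
    apply (simp_all add: field_simps)
    done
qed

lemma Cm_sym: "i < 4 \<Longrightarrow> j < 4 \<Longrightarrow> Cm w s i j = Cm w s j i"
  apply (cases w)
  apply (drule less4_cases)+
  apply (elim disjE)
  apply (simp_all add: Cm_def)
  done

lemma pointwise_kraus: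
  fixes va vb :: "nat \<Rightarrow> complex" and Xm :: "nat \<Rightarrow> nat \<Rightarrow> complex" and U :: "nat \<Rightarrow> nat \<Rightarrow> real"
  shows "(\<Sum>a<2. \<Sum>b<2. cnj (va a) * (\<Sum>c<2. \<Sum>d<2. Xm c d * of_real (2 * (\<Sum>r<4. U r (2*c+a) * U r (2*d+b)))) * vb b)
    = 2 * (\<Sum>r<4. \<Sum>c<2. \<Sum>d<2. cnj (\<Sum>a<2. va a * of_real (U r (2*c+a))) * Xm c d * (\<Sum>b<2. vb b * of_real (U r (2*d+b))))"
  by (simp add: eval_nat_numeral lessThan_Suc algebra_simps)

lemma divmod2: "a < 2 \<Longrightarrow> (2*i+a) div 2 = (i::nat) \<and> (2*i+a) mod 2 = a"
  by auto

lemma rpsd_cp: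
  assumes "rpsd 4 (Cm w s)"
  shows "completely_positive (stokes_map (R_of w s) (t_of w))"
proof -
  let ?E = "stokes_map (R_of w s) (t_of w)"
  have "\<forall>i<4. \<forall>j<4. Cm w s i j = Cm w s j i" using Cm_sym by blast
  then obtain U :: "nat \<Rightarrow> nat \<Rightarrow> real" where U: "\<forall>i<4. \<forall>j<4. Cm w s i j = (\<Sum>r<(4::nat). U r i * U r j)"
    using rpsd_decomp[OF assms] by blast
  show ?thesis unfolding completely_positive_def
  proof (intro allI impI)
    fix k X assume k: "k>0" and X: "X \<in> carrier_mat (2*k) (2*k)" and pX: "psd X"
    let ?Y = "tensor_id_map k ?E X"
    have Yc: "?Y \<in> carrier_mat (2*k) (2*k)" by (simp add: tensor_id_map_def)
    have Yent: "?Y $$ (2*i+a, 2*j+b) = (\<Sum>c<2. \<Sum>d<2. X$$(2*i+c, 2*j+d) *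
         of_real (2 * (\<Sum>r<4. U r (2*c+a) * U r (2*d+b))))"
      if ij: "i<k" "j<k" "a<2" "b<2" for i j a b
    proof -
      have "?Y $$ (2*i+a, 2*j+b) = ?E (mat 2 2 (\<lambda>(c,d). X $$ (2*i + c, 2*j + d))) $$ (a, b)"
        using ij by (simp add: tensor_id_map_def divmod2)
      also have "\<dots> = (\<Sum>c<2. \<Sum>d<2. X$$(2*i+c, 2*j+d) * of_real (2 * Cm w s (2*c+a) (2*d+b)))"
        using ij by (subst stokes_lin) auto
      also have "\<dots> = (\<Sum>c<2. \<Sum>d<2. X$$(2*i+c, 2*j+d) *
         of_real (2 * (\<Sum>r<4. U r (2*c+a) * U r (2*d+b))))"
        using ij U by (intro sum.cong refl) auto
      finally show ?thesis .
    qed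
    show "psd ?Y" unfolding psd_def
    proof (intro conjI ballI)
      show "?Y \<in> carrier_mat (dim_row ?Y) (dim_row ?Y)" using Yc by simp
      fix v :: "complex vec" assume "v \<in> carrier_vec (dim_row ?Y)"
      hence v: "v \<in> carrier_vec (2*k)" using Yc by simp
      define W where "W r = vec (2*k) (\<lambda>p. \<Sum>b<2. v$(2*(p div 2)+b) * of_real (U r (2*(p mod 2)+b)))" for r
      have Wc: "W r \<in> carrier_vec (2*k)" for r by (simp add: W_def)
      have Went: "W r $ (2*j+d) = (\<Sum>b<2. v$(2*j+b) * of_real (U r (2*d+b)))" if "j<k" "d<2" for r j d
        using that by (simp add: W_def divmod2)
      have key: "map_vec cnj v \<bullet> (?Y *\<^sub>v v) = 2 * (\<Sum>r<4. map_vec cnj (W r) \<bullet> (X *\<^sub>v W r))"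
      proof -
        have "map_vec cnj v \<bullet> (?Y *\<^sub>v v) = (\<Sum>p<2*k. \<Sum>q<2*k. cnj (v$p) * ?Y$$(p,q) * v$q)"
          by (rule qform_expand[OF Yc v])
        also have "\<dots> = (\<Sum>i<k. \<Sum>a<2. \<Sum>j<k. \<Sum>b<2. cnj (v$(2*i+a)) * ?Y$$(2*i+a,2*j+b) * v$(2*j+b))"
          by (simp only: sum_split2)
        also have "\<dots> = (\<Sum>i<k. \<Sum>a<2. \<Sum>j<k. \<Sum>b<2. cnj (v$(2*i+a)) * (\<Sum>c<2. \<Sum>d<2. X$$(2*i+c, 2*j+d) *
         of_real (2 * (\<Sum>r<4. U r (2*c+a) * U r (2*d+b))))  * v$(2*j+b))"
          by (intro sum.cong refl) (simp add: Yent)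
        also have "\<dots> = (\<Sum>i<k. \<Sum>j<k. \<Sum>a<2. \<Sum>b<2. cnj (v$(2*i+a)) * (\<Sum>c<2. \<Sum>d<2. X$$(2*i+c, 2*j+d) *
         of_real (2 * (\<Sum>r<4. U r (2*c+a) * U r (2*d+b))))  * v$(2*j+b))"
          by (rule sum.cong[OF refl], rule sum.swap)
        also have "\<dots> = (\<Sum>i<k. \<Sum>j<k. 2 * (\<Sum>r<4. \<Sum>c<2. \<Sum>d<2. cnj (\<Sum>a<2. v$(2*i+a) * of_real (U r (2*c+a)))
             * X$$(2*i+c, 2*j+d) * (\<Sum>b<2. v$(2*j+b) * of_real (U r (2*d+b)))))"
          by (rule sum.cong[OF refl], rule sum.cong[OF refl], rule pointwise_kraus)
        also have "\<dots> = 2 * (\<Sum>i<k. \<Sum>j<k. \<Sum>r<4. \<Sum>c<2. \<Sum>d<2. cnj (W r $ (2*i+c))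
             * X$$(2*i+c, 2*j+d) * W r $ (2*j+d))"
          by (simp add: sum_distrib_left Went)
        also have "\<dots> = 2 * (\<Sum>r<4. \<Sum>i<k. \<Sum>c<2. \<Sum>j<k. \<Sum>d<2. cnj (W r $ (2*i+c))
             * X$$(2*i+c, 2*j+d) * W r $ (2*j+d))"
        proof -
          have "(\<Sum>i<k. \<Sum>j<k. \<Sum>r<4. \<Sum>c<2. \<Sum>d<2. cnj (W r $ (2*i+c)) * X$$(2*i+c, 2*j+d) * W r $ (2*j+d))
             = (\<Sum>i<k. \<Sum>r<4. \<Sum>j<k. \<Sum>c<2. \<Sum>d<2. cnj (W r $ (2*i+c)) * X$$(2*i+c, 2*j+d) * W r $ (2*j+d))"
            by (rule sum.cong[OF refl], rule sum.swap)
          also have "\<dots> = (\<Sum>r<4. \<Sum>i<k. \<Sum>j<k. \<Sum>c<2. \<Sum>d<2. cnj (W r $ (2*i+c)) * X$$(2*i+c, 2*j+d) * W r $ (2*j+d))"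
            by (rule sum.swap)
          also have "\<dots> = (\<Sum>r<4. \<Sum>i<k. \<Sum>c<2. \<Sum>j<k. \<Sum>d<2. cnj (W r $ (2*i+c)) * X$$(2*i+c, 2*j+d) * W r $ (2*j+d))"
            by (rule sum.cong[OF refl], rule sum.cong[OF refl], rule sum.swap)
          finally show ?thesis by simp
        qed
        also have "\<dots> = 2 * (\<Sum>r<4. \<Sum>p<2*k. \<Sum>q<2*k. cnj (W r $ p) * X$$(p,q) * W r $ q)"
          by (simp only: sum_split2)
        also have "\<dots> = 2 * (\<Sum>r<4. map_vec cnj (W r) \<bullet> (X *\<^sub>v W r))"
          using qform_expand[OF X Wc] by simp
        finally show ?thesis .
      qed
      have pr: "Im (map_vec cnj (W r) \<bullet> (X *\<^sub>v W r)) = 0 \<and> 0 \<le> Re (map_vec cnj (W r) \<bullet> (X *\<^sub>v W r))" for r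
        using pX X Wc unfolding psd_def by auto
      show "Im (map_vec cnj v \<bullet> (?Y *\<^sub>v v)) = 0" unfolding key using pr by (simp add: Im_sum)
      show "0 \<le> Re (map_vec cnj v \<bullet> (?Y *\<^sub>v v))" unfolding key using pr by (simp add: Re_sum sum_nonneg)
    qed
  qed
qed


lemma stokes_tp: "trace_preserving (stokes_map R t)"
  unfolding trace_preserving_def
proof
  fix M :: "complex mat" assume M: "M \<in> carrier_mat 2 2"
  show "tr2 (stokes_map R t M) = tr2 M"
    unfolding stokes_entries[OF M] tr2_def by (simp add: Let_def field_simps)
qed

lemma channel_iff: "qubit_channel (R_of w s) (t_of w) \<longleftrightarrow> rpsd 4 (Cm w s)"
  using channel_rpsd rpsd_cp stokes_tp unfolding qubit_channel_def by blast




definition rsum :: "(complex \<Rightarrow> real) \<Rightarrow> complex poly \<Rightarrow> real" where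
  "rsum g p = (\<Sum>z\<in>{z. poly p z = 0}. real (order z p) * g z)"

lemma rsum_superset:
  assumes "p \<noteq> 0" "finite A" "{z. poly p z = 0} \<subseteq> A"
  shows "rsum g p = (\<Sum>z\<in>A. real (order z p) * g z)"
  unfolding rsum_def
proof (rule sum.mono_neutral_left[OF assms(2,3)])
  show "\<forall>i\<in>A - {z. poly p z = 0}. real (order i p) * g i = 0"
    using assms(1) order_root by auto
qed

lemma rsum_linear_mult:
  assumes q: "q \<noteq> 0"
  shows "rsum g ([:-b,1:] * q) = g b + rsum g q"
proof -
  let ?A = "insert b {z. poly q z = 0}"
  have fin: "finite ?A" using poly_roots_finite[OF q] by simp
  have l: "[:-b,1:] \<noteq> (0::complex poly)" by simp
  from l q have nz: "[:-b,1:] * q \<noteq> 0" by (rule no_zero_divisors)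
  have "rsum g ([:-b,1:] * q) = (\<Sum>z\<in>?A. real (order z ([:-b,1:] * q)) * g z)"
    by (rule rsum_superset[OF nz fin]) (auto simp: poly_mult)
  also have "\<dots> = (\<Sum>z\<in>?A. (if z = b then g z else 0) + real (order z q) * g z)"
  proof (intro sum.cong refl)
    fix z
    have "order z ([:-b,1:] * q) = order z [:-b,1:] + order z q" by (rule order_mult[OF nz])
    also have "order z [:-b,1:] = (if z = b then 1 else 0)" by (simp add: order_linear')
    finally show "real (order z ([:-b,1:] * q)) * g z = (if z = b then g z else 0) + real (order z q) * g z"
      by (simp add: distrib_right)
  qed
  also have "\<dots> = g b + (\<Sum>z\<in>?A. real (order z q) * g z)"
    using fin by (simp add: sum.distrib sum.delta)
  also have "(\<Sum>z\<in>?A. real (order z q) * g z) = rsum g q"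
    by (rule rsum_superset[symmetric, OF q fin]) auto
  finally show ?thesis .
qed

lemma poly_sum_lessThan:
  fixes p :: "complex poly"
  assumes "degree p < N"
  shows "poly p c = (\<Sum>i<N. coeff p i * c^i)"
proof -
  have "poly p c = (\<Sum>i\<le>degree p. coeff p i * c^i)" by (rule poly_altdef)
  also have "\<dots> = (\<Sum>i<N. coeff p i * c^i)"
    using assms by (intro sum.mono_neutral_left) (auto simp: coeff_eq_0)
  finally show ?thesis .
qed

lemma coeff_synth:
  fixes p :: "complex poly"
  shows "degree p \<le> N \<Longrightarrow> coeff (synthetic_div p c) j = (\<Sum>i<N. coeff p (Suc j + i) * c^i)"
proof (induction p arbitrary: j N rule: pCons_induct)
  case 0
  then show ?case by simp
next
  case (pCons a p)
  show ?case
  proof (cases j)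
    case 0
    show ?thesis
    proof (cases "p = 0")
      case True thus ?thesis using 0 by simp
    next
      case False
      hence "degree p < N" using pCons.prems by simp
      thus ?thesis using 0 by (simp add: poly_sum_lessThan)
    qed
  next
    case (Suc j')
    have "degree p \<le> N" using pCons.prems by (cases "p = 0") auto
    thus ?thesis using Suc pCons.IH by simp
  qed
qed




definition pconv :: "(nat \<Rightarrow> complex poly) \<Rightarrow> complex poly \<Rightarrow> bool" where
  "pconv P p \<longleftrightarrow> (\<forall>i. (\<lambda>k. coeff (P k) i) \<longlonglongrightarrow> coeff p i)"

lemma poly_tendsto:
  assumes "pconv P p" "\<forall>k. degree (P k) \<le> n" "degree p \<le> n"
  shows "(\<lambda>k. poly (P k) a) \<longlonglongrightarrow> poly p a"
proof -
  have e: "poly q a = (\<Sum>i<Suc n. coeff q i * a^i)" if "degree q \<le> n" for q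
    using poly_sum_lessThan[of q "Suc n" a] that by simp
  have "(\<lambda>k. poly (P k) a) = (\<lambda>k. \<Sum>i<Suc n. coeff (P k) i * a^i)" using e assms(2) by auto
  moreover have "(\<lambda>k. \<Sum>i<Suc n. coeff (P k) i * a^i) \<longlonglongrightarrow> (\<Sum>i<Suc n. coeff p i * a^i)"
    using assms(1) unfolding pconv_def by (intro tendsto_sum tendsto_mult tendsto_const) auto
  ultimately show ?thesis unfolding e[OF assms(3)] by simp
qed

lemma prod_roots_bound:
  fixes cs :: "complex list"
  assumes "\<forall>c\<in>set cs. r \<le> cmod (a - c)" "0 \<le> r"
  shows "r ^ length cs \<le> cmod (poly (\<Prod>c\<leftarrow>cs. [:-c, 1:]) a)"
  using assms
proof (induction cs)
  case Nil then show ?case by simp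
next
  case (Cons c cs)
  have "r ^ length (c # cs) = r * r ^ length cs" by simp
  also have "\<dots> \<le> cmod (a - c) * cmod (poly (\<Prod>c\<leftarrow>cs. [:-c, 1:]) a)"
    using Cons by (intro mult_mono) auto
  also have "\<dots> = cmod (poly (\<Prod>c\<leftarrow>c#cs. [:-c, 1:]) a)"
    by (simp add: norm_mult[symmetric] left_diff_distrib)
  finally show ?case .
qed

lemma prod_roots_root:
  fixes cs :: "complex list"
  assumes "c \<in> set cs"
  shows "poly (\<Prod>c\<leftarrow>cs. [:-c, 1:]) c = 0"
  using assms by (induction cs) auto

lemma monic_factorized:
  fixes p :: "complex poly"
  assumes "degree p = n" "coeff p n = 1"
  obtains cs where "p = (\<Prod>c\<leftarrow>cs. [:-c, 1:])" "length cs = n"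
proof -
  from fundamental_theorem_algebra_factorized[of p] obtain cs
    where "Polynomial.smult (coeff p (degree p)) (\<Prod>a\<leftarrow>cs. [:- a, 1:]) = p" by blast
  hence cA: "p = (\<Prod>a\<leftarrow>cs. [:- a, 1:])" using assms by simp
  with degree_linear_factors[of uminus cs] have "length cs = n" using assms by simp
  with cA that show ?thesis by blast
qed

lemma rsum_cont:
  fixes g :: "complex \<Rightarrow> real"
  assumes g: "\<And>z. isCont g z"
  shows "\<forall>k. degree (P k) = n \<and> coeff (P k) n = 1 \<Longrightarrow> degree p = n \<Longrightarrow> coeff p n = 1
    \<Longrightarrow> pconv P p \<Longrightarrow> (\<lambda>k. rsum g (P k)) \<longlonglongrightarrow> rsum g p"
proof (induction n arbitrary: P p)
  case 0
  have one: "q = 1" if "degree q = 0" "coeff q 0 = 1" for q :: "complex poly"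
    using that by (metis degree_0_id one_pCons)
  have "P k = 1" for k using one 0 by auto
  moreover have "p = 1" using one 0 by auto
  ultimately show ?case by simp
next
  case (Suc m)
  note PP = Suc.prems
  have "\<not> constant (poly p)" using PP(2) constant_degree[of p] by simp
  then obtain a where a: "poly p a = 0" using fundamental_theorem_of_algebra by blast
  have Pnz: "P k \<noteq> 0" for k using PP(1)[rule_format, of k] by auto
  have "\<exists>b. poly (P k) b = 0 \<and> (\<forall>z. poly (P k) z = 0 \<longrightarrow> cmod (a - b) \<le> cmod (a - z))" for k
  proof -
    let ?S = "{z. poly (P k) z = 0}"
    have fin: "finite ?S" by (rule poly_roots_finite[OF Pnz])
    have "\<not> constant (poly (P k))" using PP(1) constant_degree by (metis nat.distinct(1))
    then obtain z0 where "poly (P k) z0 = 0" using fundamental_theorem_of_algebra by blast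
    hence ne: "?S \<noteq> {}" by auto
    let ?m = "Min ((\<lambda>z. cmod (a - z)) ` ?S)"
    have "?m \<in> (\<lambda>z. cmod (a - z)) ` ?S" using fin ne by (intro Min_in) auto
    then obtain b where b: "b \<in> ?S" "cmod (a - b) = ?m" by auto
    have "\<forall>z\<in>?S. ?m \<le> cmod (a - z)" using fin by auto
    thus ?thesis using b by auto
  qed
  then obtain b where b: "\<And>k. poly (P k) (b k) = 0"
     "\<And>k z. poly (P k) z = 0 \<Longrightarrow> cmod (a - b k) \<le> cmod (a - z)"
    by metis
  have bound: "cmod (a - b k) ^ Suc m \<le> cmod (poly (P k) a)" for k
  proof -
    obtain cs where cs: "P k = (\<Prod>c\<leftarrow>cs. [:-c, 1:])" "length cs = Suc m"
      using monic_factorized[of "P k" "Suc m"] PP(1) by blast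
    have "\<forall>c\<in>set cs. cmod (a - b k) \<le> cmod (a - c)"
      using b(2) prod_roots_root cs(1) by metis
    from prod_roots_bound[OF this] cs show ?thesis by simp
  qed
  have pa: "(\<lambda>k. poly (P k) a) \<longlonglongrightarrow> 0"
    using poly_tendsto[OF PP(4), of "Suc m" a] PP a by simp
  have "(\<lambda>k. cmod (a - b k) ^ Suc m) \<longlonglongrightarrow> 0"
  proof (rule tendsto_sandwich[of "\<lambda>_. 0" _ _ "\<lambda>k. cmod (poly (P k) a)"])
    show "\<forall>\<^sub>F k in sequentially. 0 \<le> cmod (a - b k) ^ Suc m" by simp
    show "\<forall>\<^sub>F k in sequentially. cmod (a - b k) ^ Suc m \<le> cmod (poly (P k) a)" using bound by simp
    show "(\<lambda>k. cmod (poly (P k) a)) \<longlonglongrightarrow> 0" using tendsto_norm[OF pa] by simp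
  qed simp
  hence "(\<lambda>k. root (Suc m) (cmod (a - b k) ^ Suc m)) \<longlonglongrightarrow> root (Suc m) 0"
    by (intro tendsto_real_root) auto
  moreover have "root (Suc m) (cmod (a - b k) ^ Suc m) = cmod (a - b k)" for k
    by (rule real_root_power_cancel) auto
  ultimately have "(\<lambda>k. cmod (a - b k)) \<longlonglongrightarrow> 0"
    by simp
  hence ab0: "(\<lambda>k. a - b k) \<longlonglongrightarrow> 0" by (simp add: tendsto_norm_zero_iff)
  have bt: "b \<longlonglongrightarrow> a"
    using tendsto_diff[OF tendsto_const[of a] ab0] by simp
  define Q where "Q k = synthetic_div (P k) (b k)" for k
  define q where "q = synthetic_div p a"
  have PQ: "P k = [:-b k, 1:] * Q k" for k
    using synthetic_div_correct'[of "b k" "P k"] b(1) Q_def by simp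
  have pq: "p = [:-a, 1:] * q"
    using synthetic_div_correct'[of a p] a q_def by simp
  have cQ: "coeff (Q k) j = (\<Sum>i<Suc m. coeff (P k) (Suc j + i) * b k ^ i)" for k j
    unfolding Q_def by (rule coeff_synth) (use PP(1) in simp)
  have cq: "coeff q j = (\<Sum>i<Suc m. coeff p (Suc j + i) * a ^ i)" for j
    unfolding q_def by (rule coeff_synth) (use PP(2) in simp)
  have dQ: "degree (Q k) = m \<and> coeff (Q k) m = 1" for k
  proof -
    have "degree (Q k) = m" unfolding Q_def degree_synthetic_div using PP(1) by simp
    moreover have "coeff (Q k) m = 1"
    proof -
      have "coeff (Q k) m = (\<Sum>i<Suc m. coeff (P k) (Suc m + i) * b k ^ i)" by (rule cQ)
      also have "\<dots> = (\<Sum>i<Suc m. if i = 0 then 1 else 0)"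
        using PP(1) by (intro sum.cong refl) (auto simp: coeff_eq_0)
      finally show ?thesis by simp
    qed
    ultimately show ?thesis ..
  qed
  have dq: "degree q = m" "coeff q m = 1"
  proof -
    show "degree q = m" unfolding q_def degree_synthetic_div using PP(2) by simp
    have "coeff q m = (\<Sum>i<Suc m. coeff p (Suc m + i) * a ^ i)" by (rule cq)
    also have "\<dots> = (\<Sum>i<Suc m. if i = 0 then 1 else 0)"
      using PP(2,3) by (intro sum.cong refl) (auto simp: coeff_eq_0)
    finally show "coeff q m = 1" by simp
  qed
  have pQ: "pconv Q q"
    unfolding pconv_def cQ cq
  proof
    fix j
    have c: "(\<lambda>k. coeff (P k) i) \<longlonglongrightarrow> coeff p i" for i using PP(4) unfolding pconv_def by blast
    show "(\<lambda>k. \<Sum>i<Suc m. coeff (P k) (Suc j + i) * b k ^ i) \<longlonglongrightarrow> (\<Sum>i<Suc m. coeff p (Suc j + i) * a ^ i)"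
      by (intro tendsto_sum tendsto_mult tendsto_power c bt)
  qed
  have IH: "(\<lambda>k. rsum g (Q k)) \<longlonglongrightarrow> rsum g q"
    using Suc.IH[OF _ dq pQ] dQ by blast
  have Qnz: "Q k \<noteq> 0" for k using dQ[of k] by auto
  have qnz: "q \<noteq> 0" using dq by auto
  have "(\<lambda>k. g (b k) + rsum g (Q k)) \<longlonglongrightarrow> g a + rsum g q"
    by (intro tendsto_add IH isCont_tendsto_compose[OF g bt])
  thus ?case
    by (subst pq, subst PQ, simp only: rsum_linear_mult[OF Qnz] rsum_linear_mult[OF qnz])
qed





lemma eta_cont: "isCont eta x"
proof (cases "x = 0")
  case True
  have l: "(eta \<longlongrightarrow> 0) (at_left 0)"
  proof (rule tendsto_eventually[THEN tendsto_cong[THEN iffD1, rotated]])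
    show "\<forall>\<^sub>F y in at_left 0. 0 = eta y"
      by (simp add: eventually_at_left_field eta_def) (auto intro: exI[of _ "-1"])
  qed simp
  have r0: "((\<lambda>y. - y * log 2 y) \<longlongrightarrow> 0) (at_right 0)"
    unfolding log_def by real_asymp
  have r: "(eta \<longlongrightarrow> 0) (at_right 0)"
  proof (rule tendsto_cong[THEN iffD1, OF _ r0])
    show "\<forall>\<^sub>F y in at_right 0. - y * log 2 y = eta y"
      by (simp add: eventually_at_right_field eta_def) (auto intro: exI[of _ "1"])
  qed
  have "(eta \<longlongrightarrow> 0) (at 0)" using l r by (simp add: filterlim_split_at)
  thus ?thesis using True by (simp add: isCont_def eta_def)
next
  case False
  show ?thesis
  proof (cases "x < 0")
    case True
    have "eventually (\<lambda>y. y \<in> {..<0}) (nhds x)" using True by (intro eventually_nhds_in_open) auto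
    hence ev: "eventually (\<lambda>y. eta y = 0) (nhds x)" by (rule eventually_mono) (simp add: eta_def)
    have "isCont (\<lambda>_. 0::real) x" by simp
    thus ?thesis using ev True by (simp add: isCont_cong eta_def)
  next
    case False2: False
    hence xp: "x > 0" using False by simp
    have "eventually (\<lambda>y. y \<in> {0<..}) (nhds x)" using xp by (intro eventually_nhds_in_open) auto
    hence ev: "eventually (\<lambda>y. eta y = - y * log 2 y) (nhds x)" by (rule eventually_mono) (simp add: eta_def)
    have "isCont (\<lambda>y. - y * log 2 y) x" using xp by (intro continuous_intros) auto
    thus ?thesis using ev xp by (simp add: isCont_cong eta_def)
  qed
qed



lemma pconv_const: "pconv (\<lambda>k. c) c" unfolding pconv_def by simp

lemma pconv_add: "pconv P p \<Longrightarrow> pconv Q q \<Longrightarrow> pconv (\<lambda>k. P k + Q k) (p + q)"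
  unfolding pconv_def by (auto intro: tendsto_add)

lemma pconv_mult: "pconv P p \<Longrightarrow> pconv Q q \<Longrightarrow> pconv (\<lambda>k. P k * Q k) (p * q)"
  unfolding pconv_def coeff_mult by (auto intro!: tendsto_sum tendsto_mult)

lemma pconv_sum: "finite S \<Longrightarrow> (\<And>x. x \<in> S \<Longrightarrow> pconv (\<lambda>k. Fs k x) (f x))
   \<Longrightarrow> pconv (\<lambda>k. \<Sum>x\<in>S. Fs k x) (\<Sum>x\<in>S. f x)"
  by (induction S rule: finite_induct) (auto intro: pconv_add pconv_const)

lemma pconv_prod: "finite S \<Longrightarrow> (\<And>x. x \<in> S \<Longrightarrow> pconv (\<lambda>k. Fs k x) (f x))
   \<Longrightarrow> pconv (\<lambda>k. \<Prod>x\<in>S. Fs k x) (\<Prod>x\<in>S. f x)"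
  by (induction S rule: finite_induct) (auto intro: pconv_mult pconv_const)

lemma pconv_pconst: "(\<lambda>k. cs k) \<longlonglongrightarrow> c \<Longrightarrow> pconv (\<lambda>k. [:cs k:]) [:c:]"
  unfolding pconv_def by (auto simp: coeff_pCons split: nat.split)

lemma pconv_char_poly:
  assumes A: "\<And>k. A k \<in> carrier_mat n n" and B: "B \<in> carrier_mat n n"
    and conv: "\<And>i j. i < n \<Longrightarrow> j < n \<Longrightarrow> (\<lambda>k. A k $$ (i,j)) \<longlonglongrightarrow> B $$ (i,j)"
  shows "pconv (\<lambda>k. char_poly (A k)) (char_poly B)"
proof -
  have ent: "char_poly_matrix M $$ (i,j) = (if i = j then [:0,1:] else 0) + [:- M $$ (i,j):]"
    if "M \<in> carrier_mat n n" "i < n" "j < n" for M :: "complex mat" and i j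
    using that by (simp add: char_poly_matrix_def)
  have cp: "char_poly M = (\<Sum>p\<in>{p. p permutes {0..<n}}. signof p * (\<Prod>i=0..<n. char_poly_matrix M $$ (i, p i)))"
    if "M \<in> carrier_mat n n" for M :: "complex mat"
    unfolding char_poly_def by (rule det_def') (use that in simp)
  show ?thesis
    unfolding cp[OF A] cp[OF B]
  proof (intro pconv_sum pconv_mult pconv_const pconv_prod)
    show "finite {p. p permutes {0..<n}}" by (rule finite_permutations) simp
    fix p i assume p: "p \<in> {p. p permutes {0..<n}}" and i: "i \<in> {0..<n}"
    have pi: "p i < n" using p i by (auto simp: permutes_in_image)
    have e1: "(\<lambda>k. char_poly_matrix (A k) $$ (i, p i)) = (\<lambda>k. (if i = p i then [:0,1:] else 0) + [:- A k $$ (i,p i):])"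
      using ent[OF A] i pi by auto
    have e2: "char_poly_matrix B $$ (i, p i) = (if i = p i then [:0,1:] else 0) + [:- B $$ (i,p i):]"
      using ent[OF B] i pi by auto
    show "pconv (\<lambda>k. char_poly_matrix (A k) $$ (i, p i)) (char_poly_matrix B $$ (i, p i))"
      unfolding e1 e2 using i pi
      by (intro pconv_add pconv_const pconv_pconst tendsto_minus conv) auto
  qed simp
qed

lemma vn_entropy_cont:
  assumes A: "\<And>k. A k \<in> carrier_mat n n" and B: "B \<in> carrier_mat n n"
    and conv: "\<And>i j. i < n \<Longrightarrow> j < n \<Longrightarrow> (\<lambda>k. A k $$ (i,j)) \<longlonglongrightarrow> B $$ (i,j)"
  shows "(\<lambda>k. vn_entropy (A k)) \<longlonglongrightarrow> vn_entropy B"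
proof -
  have g: "isCont (\<lambda>z. eta (Re z)) z" for z
    by (rule isCont_o2[where f=Re and g=eta, OF _ eta_cont]) (unfold isCont_def, rule tendsto_Re[OF tendsto_ident_at])
  have "(\<lambda>k. rsum (\<lambda>z. eta (Re z)) (char_poly (A k))) \<longlonglongrightarrow> rsum (\<lambda>z. eta (Re z)) (char_poly B)"
    by (rule rsum_cont[OF g _ _ _ pconv_char_poly[OF A B conv]])
      (use degree_monic_char_poly[OF A] degree_monic_char_poly[OF B] in auto)
  thus ?thesis unfolding vn_entropy_def rsum_def by simp
qed




lemma Cm_cont: "i < 4 \<Longrightarrow> j < 4 \<Longrightarrow> isCont (\<lambda>z::param6\<times>real. Cm (fst z) (snd z) i j) a"
  apply (drule less4_cases)+
  apply (elim disjE)
  by (simp_all add: Cm_def split_def)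

lemma ket_carrier: "ket_proj x \<in> carrier_mat 2 2" by (simp add: ket_proj_def)

lemma E_cont:
  assumes "x < 2" "a < 2" "b < 2"
  shows "isCont (\<lambda>z::param6\<times>real. stokes_map (R_of (fst z) (snd z)) (t_of (fst z)) (ket_proj x) $$ (a,b)) p"
proof -
  have "x = 0 \<or> x = 1" "a = 0 \<or> a = 1" "b = 0 \<or> b = 1" using assms by auto
  thus ?thesis
    unfolding stokes_entries[OF ket_carrier]
    by (elim disjE) (simp_all add: ket_proj_def R_of_def t_of_def split_def Let_def; auto intro!: continuous_intros)+
qed

lemma stokes_carrier: "stokes_map R t M \<in> carrier_mat 2 2"
  by (simp add: stokes_map_def)

lemma h_cont: "continuous_on UNIV (\<lambda>z::param6\<times>real. eve_ambiguity (R_of (fst z) (snd z)) (t_of (fst z)))"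
proof (rule continuous_on_sequentiallyI)
  fix u :: "nat \<Rightarrow> param6\<times>real" and a assume u: "u \<longlonglongrightarrow> a"
  have e1: "(\<lambda>k. vn_entropy (stokes_map (R_of (fst (u k)) (snd (u k))) (t_of (fst (u k))) (ket_proj x)))
     \<longlonglongrightarrow> vn_entropy (stokes_map (R_of (fst a) (snd a)) (t_of (fst a)) (ket_proj x))" if x: "x < 2" for x
    by (rule vn_entropy_cont[OF stokes_carrier stokes_carrier])
       (rule isCont_tendsto_compose[OF E_cont[OF x] u, simplified])
  have e2: "(\<lambda>k. vn_entropy (choi (R_of (fst (u k)) (snd (u k))) (t_of (fst (u k)))))
     \<longlonglongrightarrow> vn_entropy (choi (R_of (fst a) (snd a)) (t_of (fst a)))"
    unfolding choi_Cm
    by (rule vn_entropy_cont[of _ 4]) (auto intro!: tendsto_of_real isCont_tendsto_compose[OF Cm_cont u, simplified])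
  show "(\<lambda>k. eve_ambiguity (R_of (fst (u k)) (snd (u k))) (t_of (fst (u k))))
     \<longlonglongrightarrow> eve_ambiguity (R_of (fst a) (snd a)) (t_of (fst a))"
    unfolding eve_ambiguity_def
    by (intro tendsto_diff tendsto_add tendsto_mult tendsto_const tendsto_sum e2 e1) simp
qed




lemma sum4: "(\<Sum>i<(4::nat). f i) = f 0 + f 1 + f 2 + (f 3 :: real)"
  by (simp add: eval_nat_numeral lessThan_Suc)

lemma fiber_bound:
  assumes "rpsd 4 (Cm w s)"
  shows "\<bar>s\<bar> \<le> 1"
proof -
  obtain rzz rzx rxz rxx tz tx where w: "w = (rzz, rzx, rxz, rxx, tz, tx)" by (cases w) auto
  have q: "0 \<le> (\<Sum>i<4. \<Sum>j<4. x i * Cm w s i j * x j)" for x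
    using assms unfolding rpsd_def by blast
  have 1: "0 \<le> 1 + rzz + rxx + s"
    using q[of "\<lambda>i. if i = 0 \<or> i = 3 then 1 else 0"] by (simp add: sum4 Cm_def w field_simps; linarith)
  have 2: "0 \<le> 1 + rzz - rxx - s"
    using q[of "\<lambda>i. if i = 0 then 1 else if i = 3 then -1 else 0"] by (simp add: sum4 Cm_def w field_simps; linarith)
  have 3: "0 \<le> 1 - rzz + rxx - s"
    using q[of "\<lambda>i. if i = 1 \<or> i = 2 then 1 else 0"] by (simp add: sum4 Cm_def w field_simps; linarith)
  have 4: "0 \<le> 1 - rzz - rxx + s"
    using q[of "\<lambda>i. if i = 1 then 1 else if i = 2 then -1 else 0"] by (simp add: sum4 Cm_def w field_simps; linarith)
  from 1 2 3 4 show ?thesis by linarith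
qed

lemma Cm_affine: "i < 4 \<Longrightarrow> j < 4 \<Longrightarrow> Cm w s i j = Cm w 0 i j + s * Cm w 1 i j - s * Cm w 0 i j"
  apply (cases w)
  apply (drule less4_cases)+
  apply (elim disjE)
  apply (simp_all add: Cm_def field_simps)
  done

lemma psd_kernel:
  fixes C :: "nat \<Rightarrow> nat \<Rightarrow> real"
  assumes psd: "rpsd m C" and sym: "\<And>i j. i<m \<Longrightarrow> j<m \<Longrightarrow> C i j = C j i"
    and z: "(\<Sum>i<m. \<Sum>j<m. x i * C i j * x j) = 0" and n: "n < m"
  shows "(\<Sum>i<m. C i n * x i) = 0"
proof (rule ccontr)
  define S where "S = (\<Sum>i<m. C i n * x i)"
  assume ne: "(\<Sum>i<m. C i n * x i) \<noteq> 0"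
  hence Sne: "S \<noteq> 0" by (simp add: S_def)
  have cnn: "C n n \<ge> 0"
    using spec[OF psd[unfolded rpsd_def], of "\<lambda>a. if a = n then 1 else 0"] n by (simp add: quad_delta)
  define t where "t = - S / (C n n + 1)"
  have "0 \<le> (\<Sum>i<m. \<Sum>j<m. (x i + (if i = n then t else 0)) * C i j * (x j + (if j = n then t else 0)))"
    by (rule spec[OF psd[unfolded rpsd_def]])
  also have "\<dots> = 2 * t * S + t^2 * C n n"
    using quad_shift[of m C n x t, OF sym n] z by (simp add: S_def)
  also have "\<dots> = S^2 / (C n n + 1)^2 * (- C n n - 2)"
    using cnn by (simp add: t_def divide_simps power2_eq_square) (simp add: algebra_simps)
  also have "\<dots> < 0"
    using cnn Sne by (intro mult_pos_neg) auto
  finally show False by simp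
qed

lemma pd_mid:
  assumes p1: "rpsd 4 (Cm w s1)" and p2: "rpsd 4 (Cm w s2)" and ne: "s1 \<noteq> s2"
    and t: "0 < t" "t < 1" and x: "\<exists>i<4. x i \<noteq> 0"
  shows "0 < (\<Sum>i<4. \<Sum>j<4. x i * Cm w ((1-t)*s1 + t*s2) i j * x j)"
proof -
  let ?q = "\<lambda>s. (\<Sum>i<4. \<Sum>j<4. x i * Cm w s i j * x j)"
  have q1: "?q s1 \<ge> 0" and q2: "?q s2 \<ge> 0" using p1 p2 unfolding rpsd_def by blast+
  have aff: "?q ((1-t)*s1 + t*s2) = (1-t) * ?q s1 + t * ?q s2"
  proof -
    have "?q ((1-t)*s1 + t*s2) = (\<Sum>i<4. \<Sum>j<4. (1-t) * (x i * Cm w s1 i j * x j) + t * (x i * Cm w s2 i j * x j))"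
    proof (intro sum.cong refl)
      fix i j assume "i \<in> {..<(4::nat)}" "j \<in> {..<(4::nat)}"
      hence ij: "i < 4" "j < 4" by auto
      show "x i * Cm w ((1-t)*s1 + t*s2) i j * x j = (1-t) * (x i * Cm w s1 i j * x j) + t * (x i * Cm w s2 i j * x j)"
        by (subst (1 2 3) Cm_affine[OF ij]) (simp add: algebra_simps)
    qed
    also have "\<dots> = (1-t) * ?q s1 + t * ?q s2"
      by (simp add: sum.distrib sum_distrib_left)
    finally show ?thesis .
  qed
  show ?thesis
  proof (rule ccontr)
    assume "\<not> 0 < ?q ((1-t)*s1 + t*s2)"
    hence "(1-t) * ?q s1 + t * ?q s2 \<le> 0" using aff by simp
    hence z1: "?q s1 = 0" and z2: "?q s2 = 0" using q1 q2 t
      by (smt (verit) mult_pos_pos mult_nonneg_nonneg)+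
    have k1: "(\<Sum>i<4. Cm w s1 i n * x i) = 0" if "n < 4" for n
      by (rule psd_kernel[OF p1 _ z1 that]) (simp add: Cm_sym)
    have k2: "(\<Sum>i<4. Cm w s2 i n * x i) = 0" if "n < 4" for n
      by (rule psd_kernel[OF p2 _ z2 that]) (simp add: Cm_sym)
    obtain rzz rzx rxz rxx tz tx where w: "w = (rzz, rzx, rxz, rxx, tz, tx)" by (cases w) auto
    have d: "(s2 - s1) * x 3 = 0" "(s2 - s1) * x 0 = 0" "(s2 - s1) * x 2 = 0" "(s2 - s1) * x 1 = 0"
    proof -
      have "(\<Sum>i<4. Cm w s2 i 0 * x i) - (\<Sum>i<4. Cm w s1 i 0 * x i) = 0" using k1[of 0] k2[of 0] by simp
      moreover have "(\<Sum>i<4. Cm w s2 i 0 * x i) - (\<Sum>i<4. Cm w s1 i 0 * x i) = (1/4) * ((s2 - s1) * x 3)"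
        by (simp add: sum4 Cm_def w field_simps)
      ultimately show "(s2 - s1) * x 3 = 0" by simp
      have "(\<Sum>i<4. Cm w s2 i 3 * x i) - (\<Sum>i<4. Cm w s1 i 3 * x i) = 0" using k1[of 3] k2[of 3] by simp
      moreover have "(\<Sum>i<4. Cm w s2 i 3 * x i) - (\<Sum>i<4. Cm w s1 i 3 * x i) = (1/4) * ((s2 - s1) * x 0)"
        by (simp add: sum4 Cm_def w field_simps)
      ultimately show "(s2 - s1) * x 0 = 0" by simp
      have "(\<Sum>i<4. Cm w s2 i 1 * x i) - (\<Sum>i<4. Cm w s1 i 1 * x i) = 0" using k1[of 1] k2[of 1] by simp
      moreover have "(\<Sum>i<4. Cm w s2 i 1 * x i) - (\<Sum>i<4. Cm w s1 i 1 * x i) = (-1/4) * ((s2 - s1) * x 2)"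
        by (simp add: sum4 Cm_def w field_simps)
      ultimately show "(s2 - s1) * x 2 = 0" by simp
      have "(\<Sum>i<4. Cm w s2 i 2 * x i) - (\<Sum>i<4. Cm w s1 i 2 * x i) = 0" using k1[of 2] k2[of 2] by simp
      moreover have "(\<Sum>i<4. Cm w s2 i 2 * x i) - (\<Sum>i<4. Cm w s1 i 2 * x i) = (-1/4) * ((s2 - s1) * x 1)"
        by (simp add: sum4 Cm_def w field_simps)
      ultimately show "(s2 - s1) * x 1 = 0" by simp
    qed
    hence "x 0 = 0" "x 1 = 0" "x 2 = 0" "x 3 = 0" using ne by auto
    thus False using x less4_cases by auto
  qed
qed




definition qf :: "(nat \<Rightarrow> nat \<Rightarrow> real) \<Rightarrow> (nat \<Rightarrow> real) \<Rightarrow> real" where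
  "qf C x = (\<Sum>i<4. \<Sum>j<4. x i * C i j * x j)"

definition tv :: "real \<times> real \<times> real \<times> real \<Rightarrow> nat \<Rightarrow> real" where
  "tv v i = (case v of (a,b,c,d) \<Rightarrow> if i = 0 then a else if i = 1 then b else if i = 2 then c else d)"

lemma tv_cont: "continuous_on S (\<lambda>v. tv v i)"
  by (cases "i=0"; cases "i=1"; cases "i=2") (auto simp: tv_def split_def intro!: continuous_intros)

lemma qf_scale: "qf C (\<lambda>i. r * x i) = r^2 * qf C x"
  unfolding qf_def by (simp add: sum_distrib_left power2_eq_square mult_ac)

lemma norm4: "(norm (v :: real \<times> real \<times> real \<times> real))^2 = (\<Sum>i<4. (tv v i)^2)"
  by (cases v) (simp add: norm_Pair sum4 tv_def)

lemma pd_margin: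
  assumes pd: "\<And>x. (\<exists>i<4. x i \<noteq> 0) \<Longrightarrow> 0 < qf C x"
  shows "\<exists>\<delta>>0. \<forall>x. \<delta> * (\<Sum>i<4. (x i)^2) \<le> qf C x"
proof -
  let ?S = "{v::real \<times> real \<times> real \<times> real. norm v = 1}"
  let ?f = "\<lambda>v. qf C (tv v)"
  have cS: "compact ?S" unfolding compact_eq_bounded_closed
  proof
    show "bounded ?S" unfolding bounded_iff by auto
    show "closed ?S" by (intro closed_Collect_eq continuous_intros)
  qed
  have cf: "continuous_on ?S ?f"
    unfolding qf_def by (intro continuous_intros tv_cont)
  have "compact (?f ` ?S)" by (rule compact_continuous_image[OF cf cS])
  moreover have "?f ` ?S \<noteq> {}"
  proof -
    have "(1,0,0,0) \<in> ?S" by (simp add: norm_Pair)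
    thus ?thesis by blast
  qed
  ultimately obtain d where d: "d \<in> ?f ` ?S" "\<forall>t\<in>?f ` ?S. d \<le> t"
    using compact_attains_inf by blast
  then obtain v0 where v0: "v0 \<in> ?S" "d = ?f v0" by auto
  have "(\<Sum>i<4. (tv v0 i)^2) = 1" using v0(1) norm4[of v0] by simp
  hence "\<exists>i<4. tv v0 i \<noteq> 0"
  proof (rule contrapos_pp)
    assume "\<not> (\<exists>i<4. tv v0 i \<noteq> 0)"
    hence "tv v0 i = 0" if "i < 4" for i using that by auto
    thus "(\<Sum>i<4. (tv v0 i)^2) \<noteq> 1" by simp
  qed
  hence dpos: "d > 0" using pd v0 by simp
  show ?thesis
  proof (intro exI[of _ d] conjI allI dpos)
    fix x :: "nat \<Rightarrow> real"
    define v where "v = (x 0, x 1, x 2, x 3)"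
    have tvv: "i < 4 \<Longrightarrow> tv v i = x i" for i using less4_cases[of i] by (auto simp: tv_def v_def)
    have N: "(norm v)^2 = (\<Sum>i<4. (x i)^2)" using norm4[of v] tvv by simp
    show "d * (\<Sum>i<4. (x i)^2) \<le> qf C x"
    proof (cases "norm v = 0")
      case True
      hence "(\<Sum>i<4. (x i)^2) = 0" using N by simp
      hence "x i = 0" if "i < 4" for i using that less4_cases[of i] by (auto simp: sum4 add_nonneg_eq_0_iff)
      hence "qf C x = 0" by (simp add: qf_def)
      thus ?thesis using \<open>(\<Sum>i<4. (x i)^2) = 0\<close> by simp
    next
      case False
      let ?u = "(1 / norm v) *\<^sub>R v"
      have tu: "tv ?u i = (1 / norm v) * x i" if "i < 4" for i
        using less4_cases[OF that] by (auto simp: tv_def v_def)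
      have "?u \<in> ?S" using False by (simp add: norm_scaleR)
      hence "d \<le> ?f ?u" using d(2) by blast
      also have "?f ?u = qf C (\<lambda>i. (1 / norm v) * x i)"
        unfolding qf_def by (intro sum.cong refl) (simp add: tu)
      also have "\<dots> = (1 / norm v)^2 * qf C x" by (rule qf_scale)
      finally have "d * (norm v)^2 \<le> qf C x" using False by (simp add: field_simps)
      thus ?thesis using N by simp
    qed
  qed
qed

lemma pd_perturb:
  assumes d: "\<delta> > 0" "\<forall>x. \<delta> * (\<Sum>i<4. (x i)^2) \<le> qf C x"
    and close: "(\<Sum>i<4. \<Sum>j<4. \<bar>C' i j - C i j\<bar>) \<le> \<delta>"
  shows "rpsd 4 C'"
  unfolding rpsd_def
proof
  fix x :: "nat \<Rightarrow> real"
  let ?N = "\<Sum>k<4. (x k)^2"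
  have xx: "\<bar>x i * x j\<bar> \<le> ?N" if "i < 4" "j < 4" for i j
  proof -
    have h0: "0 \<le> (\<bar>x i\<bar> - \<bar>x j\<bar>)^2" by simp
    have eq: "(\<bar>x i\<bar> - \<bar>x j\<bar>)^2 = (x i)^2 + (x j)^2 - 2 * \<bar>x i * x j\<bar>"
      by (simp add: power2_diff abs_mult)
    have "\<bar>x i * x j\<bar> \<le> ((x i)^2 + (x j)^2) / 2" using h0 unfolding eq by simp
    also have "(x i)^2 \<le> ?N" using that by (intro member_le_sum) auto
    hence "((x i)^2 + (x j)^2) / 2 \<le> ?N" using that member_le_sum[of j "{..<4}" "\<lambda>k. (x k)^2"] by auto
    finally show ?thesis .
  qed
  have "(\<Sum>i<4. \<Sum>j<4. x i * (C' i j - C i j) * x j) = qf C' x - qf C x"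
    unfolding qf_def by (simp only: sum_subtractf[symmetric]) (simp add: algebra_simps)
  hence "qf C' x = qf C x + (\<Sum>i<4. \<Sum>j<4. x i * (C' i j - C i j) * x j)" by simp
  moreover have "\<bar>\<Sum>i<4. \<Sum>j<4. x i * (C' i j - C i j) * x j\<bar> \<le> (\<Sum>i<4. \<Sum>j<4. ?N * \<bar>C' i j - C i j\<bar>)"
  proof -
    have "\<bar>\<Sum>i<4. \<Sum>j<4. x i * (C' i j - C i j) * x j\<bar> \<le> (\<Sum>i<4. \<Sum>j<4. \<bar>x i * (C' i j - C i j) * x j\<bar>)"
      by (rule order_trans[OF sum_abs]) (intro sum_mono sum_abs)
    also have "\<dots> \<le> (\<Sum>i<4. \<Sum>j<4. ?N * \<bar>C' i j - C i j\<bar>)"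
    proof (intro sum_mono)
      fix i j assume "i \<in> {..<(4::nat)}" "j \<in> {..<(4::nat)}"
      hence h: "\<bar>x i * x j\<bar> \<le> ?N" using xx by auto
      have "\<bar>x i * (C' i j - C i j) * x j\<bar> = \<bar>C' i j - C i j\<bar> * \<bar>x i * x j\<bar>"
        by (simp add: abs_mult mult_ac)
      also have "\<dots> \<le> \<bar>C' i j - C i j\<bar> * ?N" by (rule mult_left_mono[OF h]) simp
      finally show "\<bar>x i * (C' i j - C i j) * x j\<bar> \<le> ?N * \<bar>C' i j - C i j\<bar>" by (simp add: mult_ac)
    qed
    finally show ?thesis .
  qed
  moreover have "(\<Sum>i<4. \<Sum>j<4. ?N * \<bar>C' i j - C i j\<bar>) \<le> ?N * \<delta>"
  proof -
    have "(\<Sum>i<4. \<Sum>j<4. ?N * \<bar>C' i j - C i j\<bar>) = ?N * (\<Sum>i<4. \<Sum>j<4. \<bar>C' i j - C i j\<bar>)"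
      by (simp add: sum_distrib_left)
    also have "\<dots> \<le> ?N * \<delta>" by (rule mult_left_mono[OF close]) (simp add: sum_nonneg)
    finally show ?thesis .
  qed
  moreover have "\<delta> * ?N \<le> qf C x" using d by blast
  moreover have "?N * \<delta> = \<delta> * ?N" by simp
  moreover have "- \<bar>\<Sum>i<4. \<Sum>j<4. x i * (C' i j - C i j) * x j\<bar> \<le> (\<Sum>i<4. \<Sum>j<4. x i * (C' i j - C i j) * x j)"
    by simp
  ultimately have "0 \<le> qf C' x" by linarith
  thus "0 \<le> (\<Sum>i<4. \<Sum>j<4. x i * C' i j * x j)" by (simp add: qf_def)
qed


lemma Cm_cont_w: "i < 4 \<Longrightarrow> j < 4 \<Longrightarrow> ((\<lambda>w. Cm w m i j) \<longlongrightarrow> Cm a m i j) (nhds a)"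
proof -
  assume ij: "i < 4" "j < 4"
  have "isCont (\<lambda>w. Cm (fst (w,m)) (snd (w,m)) i j) a"
    by (rule isCont_o2[OF _ Cm_cont[OF ij]]) (intro continuous_intros)
  hence "isCont (\<lambda>w. Cm w m i j) a" by simp
  thus ?thesis unfolding isCont_def by (rule tendsto_at_iff_tendsto_nhds[THEN iffD1])
qed

lemma pd_eventually:
  assumes pd: "\<And>x. (\<exists>i<4. x i \<noteq> 0) \<Longrightarrow> 0 < qf (Cm a m) x"
  shows "eventually (\<lambda>w. rpsd 4 (Cm w m)) (nhds a)"
proof -
  obtain \<delta> where d: "\<delta> > 0" "\<forall>x. \<delta> * (\<Sum>i<4. (x i)^2) \<le> qf (Cm a m) x"
    using pd_margin[OF pd] by blast
  have ev: "eventually (\<lambda>w. \<bar>Cm w m i j - Cm a m i j\<bar> < \<delta>/16) (nhds a)" if "i<4" "j<4" for i j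
  proof -
    have "\<forall>e>0. eventually (\<lambda>w. \<bar>Cm w m i j - Cm a m i j\<bar> < e) (nhds a)"
      using Cm_cont_w[OF that, of m a] unfolding tendsto_iff dist_real_def by auto
    moreover have "\<delta>/16 > 0" using d(1) by simp
    ultimately show ?thesis by blast
  qed
  have "eventually (\<lambda>w. \<forall>i\<in>{..<4}. \<forall>j\<in>{..<4}. \<bar>Cm w m i j - Cm a m i j\<bar> < \<delta>/16) (nhds a)"
    using ev by (auto intro!: eventually_ball_finite)
  thus ?thesis
  proof (rule eventually_mono)
    fix w assume h: "\<forall>i\<in>{..<4}. \<forall>j\<in>{..<4}. \<bar>Cm w m i j - Cm a m i j\<bar> < \<delta>/16"
    have "(\<Sum>i<4. \<Sum>j<4. \<bar>Cm w m i j - Cm a m i j\<bar>) \<le> (\<Sum>i<(4::nat). \<Sum>j<(4::nat). \<delta>/16)"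
      using h by (intro sum_mono) (auto intro: less_imp_le)
    also have "\<dots> = \<delta>" by simp
    finally show "rpsd 4 (Cm w m)" by (rule pd_perturb[OF d])
  qed
qed




definition hh :: "param6 \<times> real \<Rightarrow> real" where
  "hh z = eve_ambiguity (R_of (fst z) (snd z)) (t_of (fst z))"

lemma hh_cont: "continuous_on UNIV hh"
  unfolding hh_def by (rule h_cont)

lemma Cm_cont_on: "i < 4 \<Longrightarrow> j < 4 \<Longrightarrow> continuous_on UNIV (\<lambda>z::param6\<times>real. Cm (fst z) (snd z) i j)"
  by (intro continuous_at_imp_continuous_on ballI Cm_cont)

lemma closed_G: "closed {z::param6\<times>real. rpsd 4 (Cm (fst z) (snd z))}"
proof -
  have "{z::param6\<times>real. rpsd 4 (Cm (fst z) (snd z))} =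
        (\<Inter>x\<in>UNIV. {z. 0 \<le> (\<Sum>i<4. \<Sum>j<4. x i * Cm (fst z) (snd z) i j * x j)})"
    unfolding rpsd_def by auto
  also have "closed \<dots>"
  proof (intro closed_INT ballI closed_Collect_le continuous_on_const)
    fix x :: "nat \<Rightarrow> real"
    show "continuous_on UNIV (\<lambda>z::param6\<times>real. \<Sum>i<4. \<Sum>j<4. x i * Cm (fst z) (snd z) i j * x j)"
      by (intro continuous_on_sum continuous_intros Cm_cont_on) auto
  qed
  finally show ?thesis .
qed

lemma Pset_eq: "Pset w = {s. rpsd 4 (Cm w s)}"
  unfolding Pset_def channel_iff ..

lemma fiber_compact: "compact {s. rpsd 4 (Cm w s)}"
  unfolding compact_eq_bounded_closed
proof
  show "bounded {s. rpsd 4 (Cm w s)}"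
    unfolding bounded_iff
  proof (intro exI[of _ 1] ballI)
    fix s assume "s \<in> {s. rpsd 4 (Cm w s)}"
    thus "norm s \<le> 1" using fiber_bound by simp
  qed
  have "{s. rpsd 4 (Cm w s)} = (\<lambda>s. (w,s)) -` {z::param6\<times>real. rpsd 4 (Cm (fst z) (snd z))}" by auto
  also have "closed \<dots>" by (intro closed_vimage closed_G continuous_intros)
  finally show "closed {s. rpsd 4 (Cm w s)}" .
qed

lemma F_min:
  assumes "\<exists>s. rpsd 4 (Cm w s)"
  shows "\<exists>s0. rpsd 4 (Cm w s0) \<and> F w = hh (w,s0) \<and> (\<forall>s. rpsd 4 (Cm w s) \<longrightarrow> hh (w,s0) \<le> hh (w,s))"
proof -
  let ?K = "{s. rpsd 4 (Cm w s)}"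
  have "compact ((\<lambda>s. hh (w,s)) ` ?K)"
    by (rule compact_continuous_image[OF _ fiber_compact])
       (rule continuous_on_compose2[OF hh_cont]; auto intro!: continuous_intros)
  moreover have "(\<lambda>s. hh (w,s)) ` ?K \<noteq> {}" using assms by auto
  ultimately obtain v where v: "v \<in> (\<lambda>s. hh (w,s)) ` ?K" "\<forall>t\<in>(\<lambda>s. hh (w,s)) ` ?K. v \<le> t"
    using compact_attains_inf by blast
  then obtain s0 where s0: "rpsd 4 (Cm w s0)" "v = hh (w,s0)" by auto
  have "F w = Inf ((\<lambda>s. hh (w,s)) ` ?K)"
    unfolding F_def Pset_eq hh_def by simp
  also have "\<dots> = v" by (rule cInf_eq_minimum) (use v in auto)
  finally show ?thesis using s0 v by auto
qed

lemma dist_pair_le: "dist (w::param6, s::real) (a, b) \<le> dist w a + dist s b"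
proof -
  have "dist (w, s) (a, b) = norm (w - a, s - b)" by (simp add: dist_norm)
  also have "\<dots> \<le> norm (w - a) + norm (s - b)" by (rule norm_Pair_le)
  finally show ?thesis by (simp add: dist_norm)
qed

lemma L_proj:
  assumes Phi: "closed {z::param6\<times>real. Phi z}"
    and no: "\<not> (\<exists>s. rpsd 4 (Cm a s) \<and> Phi (a,s))"
  shows "eventually (\<lambda>w. \<forall>s. rpsd 4 (Cm w s) \<longrightarrow> \<not> Phi (w,s)) (nhds a)"
proof -
  let ?K = "{z::param6\<times>real. rpsd 4 (Cm (fst z) (snd z))} \<inter> {z. dist (fst z) a \<le> 1}
             \<inter> {z. \<bar>snd z\<bar> \<le> 1} \<inter> {z. Phi z}"
  have cl: "closed ?K"
    by (intro closed_Int closed_G Phi closed_Collect_le continuous_intros)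
  have "?K \<subseteq> cball a 1 \<times> cball 0 1" by (auto simp: dist_commute)
  hence bd: "bounded ?K" by (rule bounded_subset[OF bounded_Times[OF bounded_cball bounded_cball]])
  have "compact ?K" using cl bd by (simp add: compact_eq_bounded_closed)
  hence "compact (fst ` ?K)" by (intro compact_continuous_image continuous_intros)
  hence cK: "closed (fst ` ?K)" by (rule compact_imp_closed)
  have aK: "a \<notin> fst ` ?K" using no by auto
  have e1: "eventually (\<lambda>w. w \<in> - (fst ` ?K)) (nhds a)"
    using cK aK by (intro eventually_nhds_in_open) auto
  have e2: "eventually (\<lambda>w. dist w a < 1) (nhds a)"
    by (rule eventually_nhds_metric[THEN iffD2], rule exI[of _ 1], simp)
  show ?thesis
    using e1 e2
  proof eventually_elim
    case (elim w)
    show ?case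
    proof (intro allI impI notI)
      fix s assume r: "rpsd 4 (Cm w s)" and p: "Phi (w,s)"
      have "(w,s) \<in> ?K" using r p elim(2) fiber_bound[OF r] by auto
      thus False using elim(1) by force
    qed
  qed
qed

lemma LHC:
  assumes a: "\<exists>s. rpsd 4 (Cm a s)" and st: "rpsd 4 (Cm a st)" and eta: "\<eta> > 0"
  shows "eventually (\<lambda>w. (\<exists>s. rpsd 4 (Cm w s)) \<longrightarrow> (\<exists>s. rpsd 4 (Cm w s) \<and> \<bar>s - st\<bar> < \<eta>)) (nhds a)"
proof (cases "\<exists>s2. rpsd 4 (Cm a s2) \<and> s2 \<noteq> st")
  case True
  then obtain s2 where s2: "rpsd 4 (Cm a s2)" "s2 \<noteq> st" by blast
  define t where "t = min (1/2) (\<eta> / (2 * \<bar>s2 - st\<bar>))"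
  have d: "\<bar>s2 - st\<bar> > 0" using s2 by simp
  have t: "0 < t" "t < 1" using eta d by (auto simp: t_def)
  define m where "m = (1-t)*st + t*s2"
  have "m - st = t * (s2 - st)" by (simp add: m_def algebra_simps)
  hence "\<bar>m - st\<bar> = t * \<bar>s2 - st\<bar>" using t by (simp add: abs_mult)
  also have "\<dots> \<le> (\<eta> / (2 * \<bar>s2 - st\<bar>)) * \<bar>s2 - st\<bar>"
    by (rule mult_right_mono) (auto simp: t_def)
  also have "\<dots> = \<eta>/2" using d by simp
  finally have mc: "\<bar>m - st\<bar> < \<eta>" using eta by simp
  have "eventually (\<lambda>w. rpsd 4 (Cm w m)) (nhds a)"
  proof (rule pd_eventually)
    fix x :: "nat \<Rightarrow> real" assume "\<exists>i<4. x i \<noteq> 0"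
    from pd_mid[OF st s2(1) s2(2)[symmetric] t this] show "0 < qf (Cm a m) x"
      by (simp add: qf_def m_def)
  qed
  thus ?thesis by (rule eventually_mono) (use mc in blast)
next
  case False
  hence only: "\<And>s. rpsd 4 (Cm a s) \<Longrightarrow> s = st" by blast
  have "eventually (\<lambda>w. \<forall>s. rpsd 4 (Cm w s) \<longrightarrow> \<not> (\<eta> \<le> \<bar>snd (w,s) - st\<bar>)) (nhds a)"
  proof (rule L_proj)
    show "closed {z::param6\<times>real. \<eta> \<le> \<bar>snd z - st\<bar>}"
      by (intro closed_Collect_le continuous_intros)
    show "\<not> (\<exists>s. rpsd 4 (Cm a s) \<and> \<eta> \<le> \<bar>snd (a, s) - st\<bar>)" using only eta by force
  qed
  thus ?thesis by (rule eventually_mono) force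
qed

theorem lemma1:
  shows "continuous_on Pdom F"
  unfolding continuous_on_iff
proof (intro ballI allI impI)
  fix a e assume aP: "a \<in> Pdom" and e: "(e::real) > 0"
  have Pdom_iff: "w \<in> Pdom \<longleftrightarrow> (\<exists>s. rpsd 4 (Cm w s))" for w
    unfolding Pdom_def Pset_eq by auto
  have a: "\<exists>s. rpsd 4 (Cm a s)" using aP Pdom_iff by blast
  obtain st where st: "rpsd 4 (Cm a st)" "F a = hh (a,st)" "\<forall>s. rpsd 4 (Cm a s) \<longrightarrow> hh (a,st) \<le> hh (a,s)"
    using F_min[OF a] by blast
  obtain r where r: "r > 0" "\<forall>z. dist z (a,st) < r \<longrightarrow> dist (hh z) (hh (a,st)) < e"
    using hh_cont e unfolding continuous_on_iff by blast
  have U1: "eventually (\<lambda>w. w \<in> Pdom \<longrightarrow> F w < F a + e) (nhds a)"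
  proof -
    have e1: "eventually (\<lambda>w. (\<exists>s. rpsd 4 (Cm w s)) \<longrightarrow> (\<exists>s. rpsd 4 (Cm w s) \<and> \<bar>s - st\<bar> < r/2)) (nhds a)"
      by (rule LHC[OF a st(1)]) (use r in simp)
    have e2: "eventually (\<lambda>w. dist w a < r/2) (nhds a)"
      by (rule eventually_nhds_metric[THEN iffD2], rule exI[of _ "r/2"]) (use r in simp)
    show ?thesis using e1 e2
    proof eventually_elim
      case (elim w)
      show ?case
      proof
        assume "w \<in> Pdom"
        hence wP: "\<exists>s. rpsd 4 (Cm w s)" using Pdom_iff by blast
        then obtain s where s: "rpsd 4 (Cm w s)" "\<bar>s - st\<bar> < r/2" using elim(1) by blast
        obtain s0 where s0: "rpsd 4 (Cm w s0)" "F w = hh (w,s0)" "\<forall>s. rpsd 4 (Cm w s) \<longrightarrow> hh (w,s0) \<le> hh (w,s)"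
          using F_min[OF wP] by blast
        have "dist (w,s) (a,st) \<le> dist w a + dist s st" by (rule dist_pair_le)
        also have "\<dots> < r" using elim(2) s(2) by (simp add: dist_real_def)
        finally have "dist (hh (w,s)) (hh (a,st)) < e" using r by blast
        hence "hh (w,s) < hh (a,st) + e" by (simp add: dist_real_def)
        thus "F w < F a + e" using s0 s st by force
      qed
    qed
  qed
  have U2: "eventually (\<lambda>w. w \<in> Pdom \<longrightarrow> F a - e < F w) (nhds a)"
  proof -
    have "eventually (\<lambda>w. \<forall>s. rpsd 4 (Cm w s) \<longrightarrow> \<not> (hh (w,s) \<le> F a - e)) (nhds a)"
    proof (rule L_proj)
      show "closed {z. hh z \<le> F a - e}"
        by (intro closed_Collect_le hh_cont continuous_on_const)
      show "\<not> (\<exists>s. rpsd 4 (Cm a s) \<and> hh (a, s) \<le> F a - e)" using st e by force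
    qed
    thus ?thesis
    proof (rule eventually_mono, intro impI)
      fix w assume h: "\<forall>s. rpsd 4 (Cm w s) \<longrightarrow> \<not> hh (w, s) \<le> F a - e" and "w \<in> Pdom"
      hence wP: "\<exists>s. rpsd 4 (Cm w s)" using Pdom_iff by blast
      obtain s0 where s0: "rpsd 4 (Cm w s0)" "F w = hh (w,s0)"
        using F_min[OF wP] by blast
      show "F a - e < F w" using h s0 by force
    qed
  qed
  have "eventually (\<lambda>w. w \<in> Pdom \<longrightarrow> dist (F w) (F a) < e) (nhds a)"
    using U1 U2 by eventually_elim (auto simp: dist_real_def)
  then obtain d where d: "d > 0" "\<forall>w. dist w a < d \<longrightarrow> w \<in> Pdom \<longrightarrow> dist (F w) (F a) < e"
    unfolding eventually_nhds_metric by blast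
  show "\<exists>d>0. \<forall>x'\<in>Pdom. dist x' a < d \<longrightarrow> dist (F x') (F a) < e"
    using d by blast
qed


end
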